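(* Let $\hat{x}$ be the final value of the vector $x$ in Algorithm 1. If $\|\hat{x}\|_1=k$, then $F(\hat{x})\ge c\tau$.
   Context: Setting: finite ground set $N$ whose elements arrive one at a time in a stream, non-negative submodular $f\colon 2^N\to\mathbb{R}_{\ge 0}$, positive integer $k$. $F$ is the multilinear extension of $f$: $F(x)=\sum_{A\subseteq N} f(A)\prod_{u\in A}x_u\prod_{u\notin A}(1-x_u)$ for $x\in[0,1]^N$, and $\partial_uF(x)=F(x\vee \mathbf{1}_u)-F(x\wedge\mathbf{1}_{N\setminus\{u\}})$ (coordinatewise max/min with characteristic vectors). $\mathrm{supp}(x)=\{u: x_u>0\}$. Algorithm 1 has parameters $p\in(0,1)$, $c>0$, $\alpha\in(0,1]$ and a number $\tau$ (an estimate of the optimal value). It starts with $x=\mathbf{0}$, and when an element $u$ arrives, if $\partial_uF(x)\ge c\tau/k$ it sets $x\leftarrow x+\min\{p,\,k-\|x\|_1\}\cdot\mathbf{1}_u$ (otherwise $x$ is unchanged). After the stream ends, it computes a random set $S_1$ with $|S_1|\le k$ and $\mathbb{E}[f(S_1)]\ge F(x)$ (by rounding $x$), and a random set $S_2\subseteq\mathrm{supp}(x)$ with $|S_2|\le k$ and $\mathbb{E}[f(S_2)]\ge\alpha\cdot\max_{S\subseteq\mathrm{supp}(x),|S|\le k}f(S)$, and outputs the better of $S_1,S_2$. *)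

theory Defs
  imports Complex_Main
begin

text \<open>Set functions on a finite ground set N; vectors in [0,1]^N are functions
  'a => real (only values on N matter).\<close>

definition nonneg_on :: "'a set \<Rightarrow> ('a set \<Rightarrow> real) \<Rightarrow> bool" where
  "nonneg_on N f \<longleftrightarrow> (\<forall>A. A \<subseteq> N \<longrightarrow> f A \<ge> 0)"

definition submodular_on :: "'a set \<Rightarrow> ('a set \<Rightarrow> real) \<Rightarrow> bool" where
  "submodular_on N f \<longleftrightarrow>
     (\<forall>A B. A \<subseteq> N \<longrightarrow> B \<subseteq> N \<longrightarrow> f (A \<union> B) + f (A \<inter> B) \<le> f A + f B)"

definition multilinear_ext :: "'a set \<Rightarrow> ('a set \<Rightarrow> real) \<Rightarrow> ('a \<Rightarrow> real) \<Rightarrow> real" where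
  "multilinear_ext N f x =
     (\<Sum>A\<in>Pow N. f A * (\<Prod>u\<in>A. x u) * (\<Prod>u\<in>N - A. 1 - x u))"

definition char_vec :: "'a set \<Rightarrow> 'a \<Rightarrow> real" where
  "char_vec S = (\<lambda>v. if v \<in> S then 1 else 0)"

definition partial_F :: "'a set \<Rightarrow> ('a set \<Rightarrow> real) \<Rightarrow> 'a \<Rightarrow> ('a \<Rightarrow> real) \<Rightarrow> real" where
  "partial_F N f u x =
     multilinear_ext N f (\<lambda>v. max (x v) (char_vec {u} v))
     - multilinear_ext N f (\<lambda>v. min (x v) (char_vec (N - {u}) v))"

definition norm1 :: "'a set \<Rightarrow> ('a \<Rightarrow> real) \<Rightarrow> real" where
  "norm1 N x = (\<Sum>v\<in>N. \<bar>x v\<bar>)"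

definition alg1_step :: "'a set \<Rightarrow> ('a set \<Rightarrow> real) \<Rightarrow> nat \<Rightarrow> real \<Rightarrow> real \<Rightarrow> real
    \<Rightarrow> ('a \<Rightarrow> real) \<Rightarrow> 'a \<Rightarrow> ('a \<Rightarrow> real)" where
  "alg1_step N f k p c \<tau> x u =
     (if partial_F N f u x \<ge> c * \<tau> / real k
      then (\<lambda>v. x v + min p (real k - norm1 N x) * char_vec {u} v)
      else x)"

definition alg1_x :: "'a set \<Rightarrow> ('a set \<Rightarrow> real) \<Rightarrow> nat \<Rightarrow> real \<Rightarrow> real \<Rightarrow> real
    \<Rightarrow> 'a list \<Rightarrow> ('a \<Rightarrow> real)" where
  "alg1_x N f k p c \<tau> stream = foldl (alg1_step N f k p c \<tau>) (\<lambda>_. 0) stream"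

end

theory Submission
  imports Defs
begin

lemma ml_split:
  assumes "finite M" "u \<notin> M"
  shows "multilinear_ext (insert u M) f y =
    (\<Sum>A\<in>Pow M. ((1 - y u) * f A + y u * f (insert u A)) * (\<Prod>v\<in>A. y v) * (\<Prod>v\<in>M - A. 1 - y v))"
proof -
  have disj: "Pow M \<inter> insert u ` Pow M = {}" using assms by auto
  have inj: "inj_on (insert u) (Pow M)"
    by (smt (verit, ccfv_SIG) PowD assms(2) inj_on_def insert_ident subset_iff)
  have fin: "finite (Pow M)" "finite (insert u ` Pow M)" using assms by auto
  have "multilinear_ext (insert u M) f y =
     (\<Sum>A\<in>Pow M. f A * (\<Prod>v\<in>A. y v) * (\<Prod>v\<in>insert u M - A. 1 - y v))
     + (\<Sum>A\<in>insert u ` Pow M. f A * (\<Prod>v\<in>A. y v) * (\<Prod>v\<in>insert u M - A. 1 - y v))"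
    unfolding multilinear_ext_def Pow_insert using sum.union_disjoint[OF fin disj] by simp
  also have "(\<Sum>A\<in>insert u ` Pow M. f A * (\<Prod>v\<in>A. y v) * (\<Prod>v\<in>insert u M - A. 1 - y v))
     = (\<Sum>A\<in>Pow M. f (insert u A) * (\<Prod>v\<in>insert u A. y v) * (\<Prod>v\<in>insert u M - insert u A. 1 - y v))"
    by (rule sum.reindex_cong[OF inj refl]) simp
  also have "\<dots> = (\<Sum>A\<in>Pow M. y u * f (insert u A) * (\<Prod>v\<in>A. y v) * (\<Prod>v\<in>M - A. 1 - y v))"
  proof (rule sum.cong)
    fix A assume "A \<in> Pow M"
    hence A: "A \<subseteq> M" "finite A" using assms finite_subset by auto
    have "insert u M - insert u A = M - A" using assms A by auto
    moreover have "(\<Prod>v\<in>insert u A. y v) = y u * (\<Prod>v\<in>A. y v)" using A assms by (subst prod.insert) auto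
    ultimately show "f (insert u A) * (\<Prod>v\<in>insert u A. y v) * (\<Prod>v\<in>insert u M - insert u A. 1 - y v)
       = y u * f (insert u A) * (\<Prod>v\<in>A. y v) * (\<Prod>v\<in>M - A. 1 - y v)" by simp
  qed simp
  also have "(\<Sum>A\<in>Pow M. f A * (\<Prod>v\<in>A. y v) * (\<Prod>v\<in>insert u M - A. 1 - y v))
     = (\<Sum>A\<in>Pow M. (1 - y u) * f A * (\<Prod>v\<in>A. y v) * (\<Prod>v\<in>M - A. 1 - y v))"
  proof (rule sum.cong)
    fix A assume "A \<in> Pow M"
    hence A: "A \<subseteq> M" using assms by auto
    have "insert u M - A = insert u (M - A)" using assms A by auto
    moreover have "finite (M - A)" using assms by auto
    ultimately have "(\<Prod>v\<in>insert u M - A. 1 - y v) = (1 - y u) * (\<Prod>v\<in>M - A. 1 - y v)"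
      using assms by simp
    thus "f A * (\<Prod>v\<in>A. y v) * (\<Prod>v\<in>insert u M - A. 1 - y v)
       = (1 - y u) * f A * (\<Prod>v\<in>A. y v) * (\<Prod>v\<in>M - A. 1 - y v)" by simp
  qed simp
  finally show ?thesis by (simp add: sum.distrib[symmetric] algebra_simps)
qed

lemma ml_cong:
  assumes "\<And>v. v \<in> N \<Longrightarrow> y v = z v"
  shows "multilinear_ext N f y = multilinear_ext N f z"
  unfolding multilinear_ext_def
  by (rule sum.cong[OF refl]) (use assms in \<open>auto intro!: prod.cong\<close>)

lemma key:
  assumes "finite N" "u \<in> N" "y u = 0" "\<And>v. 0 \<le> y v \<and> y v \<le> 1"
  shows "multilinear_ext N f (y(u := d)) = multilinear_ext N f y + d * partial_F N f u y"
proof -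
  define M where "M = N - {u}"
  have NM: "N = insert u M" "u \<notin> M" "finite M" using assms M_def by auto
  define P where "P A = (\<Prod>v\<in>A. y v) * (\<Prod>v\<in>M - A. 1 - y v)" for A
  have gen: "multilinear_ext N f z = (\<Sum>A\<in>Pow M. ((1 - z u) * f A + z u * f (insert u A)) * P A)"
    if "\<And>v. v \<in> M \<Longrightarrow> z v = y v" for z
  proof -
    have "multilinear_ext N f z = (\<Sum>A\<in>Pow M. ((1 - z u) * f A + z u * f (insert u A)) * (\<Prod>v\<in>A. z v) * (\<Prod>v\<in>M - A. 1 - z v))"
      using ml_split[OF NM(3) NM(2)] NM(1) by simp
    also have "\<dots> = (\<Sum>A\<in>Pow M. ((1 - z u) * f A + z u * f (insert u A)) * P A)"
    proof (rule sum.cong[OF refl])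
      fix A assume "A \<in> Pow M"
      hence "(\<Prod>v\<in>A. z v) = (\<Prod>v\<in>A. y v)" "(\<Prod>v\<in>M - A. 1 - z v) = (\<Prod>v\<in>M - A. 1 - y v)"
        using that by (auto intro!: prod.cong)
      thus "((1 - z u) * f A + z u * f (insert u A)) * (\<Prod>v\<in>A. z v) * (\<Prod>v\<in>M - A. 1 - z v) =
         ((1 - z u) * f A + z u * f (insert u A)) * P A" unfolding P_def by simp
    qed
    finally show ?thesis .
  qed
  have e1: "multilinear_ext N f (y(u := d)) = (\<Sum>A\<in>Pow M. ((1 - d) * f A + d * f (insert u A)) * P A)"
  proof -
    have g: "\<And>v. v \<in> M \<Longrightarrow> (y(u := d)) v = y v" using NM by auto
    show ?thesis using gen[OF g] by (simp add: fun_upd_def)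
  qed
  have e2: "multilinear_ext N f y = (\<Sum>A\<in>Pow M. f A * P A)"
    using gen[of y] assms(3) by simp
  have e3: "multilinear_ext N f (\<lambda>v. max (y v) (char_vec {u} v)) = (\<Sum>A\<in>Pow M. f (insert u A) * P A)"
  proof -
    have g: "\<And>v. v \<in> M \<Longrightarrow> max (y v) (char_vec {u} v) = y v" using NM assms(4) by (auto simp: char_vec_def)
    show ?thesis using gen[OF g] assms(3) by (simp add: char_vec_def)
  qed
  have e4: "multilinear_ext N f (\<lambda>v. min (y v) (char_vec (N - {u}) v)) = (\<Sum>A\<in>Pow M. f A * P A)"
  proof -
    have g: "min (y v) (char_vec (N - {u}) v) = y v" if "v \<in> M" for v
    proof -
      have "v \<in> N - {u}" using that unfolding M_def .
      thus ?thesis using assms(4)[of v] by (simp add: char_vec_def)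
    qed
    have "char_vec (N - {u}) u = 0" by (simp add: char_vec_def)
    thus ?thesis using gen[OF g] assms(3) by simp
  qed
  show ?thesis
  proof -
    have a: "(\<Sum>A\<in>Pow M. f (insert u A) * P A) - (\<Sum>A\<in>Pow M. f A * P A)
       = (\<Sum>A\<in>Pow M. (f (insert u A) - f A) * P A)"
      by (simp add: sum_subtractf[symmetric] left_diff_distrib)
    have b: "d * (\<Sum>A\<in>Pow M. (f (insert u A) - f A) * P A) = (\<Sum>A\<in>Pow M. d * ((f (insert u A) - f A) * P A))"
      by (rule sum_distrib_left)
    have c: "(\<Sum>A\<in>Pow M. f A * P A) + (\<Sum>A\<in>Pow M. d * ((f (insert u A) - f A) * P A))
       = (\<Sum>A\<in>Pow M. f A * P A + d * ((f (insert u A) - f A) * P A))"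
      by (rule sum.distrib[symmetric])
    have e: "(\<Sum>A\<in>Pow M. f A * P A + d * ((f (insert u A) - f A) * P A))
       = (\<Sum>A\<in>Pow M. ((1 - d) * f A + d * f (insert u A)) * P A)"
      by (rule sum.cong[OF refl]) (simp add: algebra_simps)
    show ?thesis unfolding partial_F_def e1 e2 e3 e4 a b c e ..
  qed
qed

lemma inv:
  assumes fin: "finite N" and kpos: "k > 0" and p0: "0 < p" and p1: "p < 1"
  shows "distinct xs \<Longrightarrow> set xs \<subseteq> N \<Longrightarrow>
    (\<forall>v. v \<notin> set xs \<longrightarrow> foldl (alg1_step N f k p c \<tau>) (\<lambda>_. 0) xs v = 0) \<and>
    (\<forall>v. 0 \<le> foldl (alg1_step N f k p c \<tau>) (\<lambda>_. 0) xs v \<and> foldl (alg1_step N f k p c \<tau>) (\<lambda>_. 0) xs v \<le> 1) \<and>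
    norm1 N (foldl (alg1_step N f k p c \<tau>) (\<lambda>_. 0) xs) \<le> real k \<and>
    multilinear_ext N f (foldl (alg1_step N f k p c \<tau>) (\<lambda>_. 0) xs)
      \<ge> f {} + norm1 N (foldl (alg1_step N f k p c \<tau>) (\<lambda>_. 0) xs) * (c * \<tau> / real k)"
proof (induction xs rule: rev_induct)
  case Nil
  have "multilinear_ext N f (\<lambda>_. 0) = (\<Sum>A\<in>Pow N. if A = {} then f {} else 0)"
    unfolding multilinear_ext_def
  proof (rule sum.cong[OF refl])
    fix A assume A: "A \<in> Pow N"
    hence "finite A" using fin finite_subset by auto
    thus "f A * (\<Prod>u\<in>A. (0::real)) * (\<Prod>u\<in>N - A. 1 - 0) = (if A = {} then f {} else 0)"
      by auto
  qed
  also have "\<dots> = f {}" using fin by (simp add: sum.delta)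
  finally show ?case by (simp add: norm1_def)
next
  case (snoc u xs)
  define y where "y = foldl (alg1_step N f k p c \<tau>) (\<lambda>_. 0) xs"
  have dxs: "distinct xs" "u \<notin> set xs" "set xs \<subseteq> N" "u \<in> N" using snoc.prems by auto
  have IH: "\<forall>v. v \<notin> set xs \<longrightarrow> y v = 0" "\<forall>v. 0 \<le> y v \<and> y v \<le> 1" "norm1 N y \<le> real k"
     "multilinear_ext N f y \<ge> f {} + norm1 N y * (c * \<tau> / real k)"
    using snoc.IH[OF dxs(1,3)] unfolding y_def by auto
  have yu: "y u = 0" using IH(1) dxs(2) by auto
  have n1: "norm1 N z = (\<Sum>v\<in>N. z v)" if "\<forall>v. 0 \<le> z v" for z
    unfolding norm1_def using that by (intro sum.cong) auto
  have goal: "(\<forall>v. v \<notin> set (xs @ [u]) \<longrightarrow> alg1_step N f k p c \<tau> y u v = 0) \<and>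
    (\<forall>v. 0 \<le> alg1_step N f k p c \<tau> y u v \<and> alg1_step N f k p c \<tau> y u v \<le> 1) \<and>
    norm1 N (alg1_step N f k p c \<tau> y u) \<le> real k \<and>
    multilinear_ext N f (alg1_step N f k p c \<tau> y u)
      \<ge> f {} + norm1 N (alg1_step N f k p c \<tau> y u) * (c * \<tau> / real k)"
  proof (cases "partial_F N f u y \<ge> c * \<tau> / real k")
    case False
    thus ?thesis using IH unfolding alg1_step_def by auto
  next
    case True
    define d where "d = min p (real k - norm1 N y)"
    have d0: "0 \<le> d" "d \<le> p" using IH(3) p0 unfolding d_def by auto
    have st: "alg1_step N f k p c \<tau> y u = y(u := d)"
      using True yu unfolding alg1_step_def d_def by (auto simp: char_vec_def)
    have pos: "\<forall>v. 0 \<le> (y(u := d)) v" using IH(2) d0 by auto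
    have "norm1 N (y(u := d)) = (\<Sum>v\<in>N. (y(u := d)) v)" using n1[OF pos] .
    also have "\<dots> = (\<Sum>v\<in>N. y v + (if v = u then d else 0))"
      using yu by (intro sum.cong) auto
    also have "\<dots> = (\<Sum>v\<in>N. y v) + d" using fin dxs(4) by (simp add: sum.distrib)
    also have "(\<Sum>v\<in>N. y v) = norm1 N y" using n1 IH(2) by simp
    finally have nn: "norm1 N (y(u := d)) = norm1 N y + d" .
    have F: "multilinear_ext N f (y(u := d)) = multilinear_ext N f y + d * partial_F N f u y"
      using key[of N u y f d] fin dxs(4) yu IH(2) by blast
    have m: "d * (c * \<tau> / real k) \<le> d * partial_F N f u y" using mult_left_mono[OF True d0(1)] .
    show ?thesis unfolding st
    proof (intro conjI allI impI)
      fix v assume "v \<notin> set (xs @ [u])" thus "(y(u := d)) v = 0" using IH(1) by auto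
    next
      fix v show "0 \<le> (y(u := d)) v" using pos by auto
    next
      fix v show "(y(u := d)) v \<le> 1" using IH(2) d0 p1 by auto
    next
      show "norm1 N (y(u := d)) \<le> real k" using nn d_def by auto
    next
      show "f {} + norm1 N (y(u := d)) * (c * \<tau> / real k) \<le> multilinear_ext N f (y(u := d))"
      proof -
        have "norm1 N (y(u := d)) * (c * \<tau> / real k) = norm1 N y * (c * \<tau> / real k) + d * (c * \<tau> / real k)"
          unfolding nn by (rule distrib_right)
        thus ?thesis using F m IH(4) by linarith
      qed
    qed
  qed
  thus ?case unfolding y_def by simp
qed

theorem lemma3p3:
  fixes N :: "'a set" and f :: "'a set \<Rightarrow> real" and k :: nat
    and p c \<alpha> \<tau> :: real and stream :: "'a list"
  assumes "finite N"
    and "nonneg_on N f" and "submodular_on N f"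
    and "k > 0"
    and "0 < p" and "p < 1" and "c > 0" and "0 < \<alpha>" and "\<alpha> \<le> 1"
    and "distinct stream" and "set stream = N"
    and "norm1 N (alg1_x N f k p c \<tau> stream) = real k"
  shows "multilinear_ext N f (alg1_x N f k p c \<tau> stream) \<ge> c * \<tau>"
proof -
  have I: "multilinear_ext N f (alg1_x N f k p c \<tau> stream)
      \<ge> f {} + norm1 N (alg1_x N f k p c \<tau> stream) * (c * \<tau> / real k)"
    using inv[OF assms(1,4,5,6), of stream f c \<tau>] assms(10,11) unfolding alg1_x_def by auto
  have "f {} \<ge> 0" using assms(2) unfolding nonneg_on_def by auto
  moreover have "real k * (c * \<tau> / real k) = c * \<tau>" using assms(4) by simp
  ultimately show ?thesis using I assms(12) by simp
qed

end
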